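(* Let $G=(V,E)$ be an arbitrary graph with capacities $b_v\ge0$, demands $d_{u,e},d_{v,e}\ge0$ and profits $p_e\ge0$ for each edge $e=uv$, such that the instance has a consistent ordering of edges and $d_{v,e}\le b_v$ for all $v$ and $e\in\delta(v)$. Let $M'\subseteq E$ satisfy $\sum_{e\in\delta_{M'}(v)\setminus L(v)}d_{v,e}\le b_v$ for every $v\in V$, where $L(v)$ is a set of the two edges of $\delta_{M'}(v)$ with highest $d_{v,e}$ (or $L(v)=\delta_{M'}(v)$ if $|\delta_{M'}(v)|\le1$). Then one can find $M\subseteq M'$ with $\sum_{e\in\delta_M(v)}d_{v,e}\le b_v$ for all $v\in V$ and $p(M)\ge\frac{p(M')}{5}$.
   Context: A consistent ordering of edges is a linear order of $E$ whose restriction to each $\delta(v)$ lists the edges in nondecreasing order of $d_{v,e}$. $\delta(v)$ is the set of edges incident to $v$, $\delta_{M'}(v)=\delta(v)\cap M'$, $p(M)=\sum_{e\in M}p_e$. *)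

theory Defs
  imports Complex_Main
begin

text \<open>A graph is given by a finite vertex set V, a finite edge set E (edges are abstract
objects, so parallel edges are allowed) and a map ends giving the two endpoints of each edge.\<close>

definition graph :: "'v set \<Rightarrow> 'e set \<Rightarrow> ('e \<Rightarrow> 'v set) \<Rightarrow> bool" where
  "graph V E ends \<longleftrightarrow> finite V \<and> finite E \<and> (\<forall>e\<in>E. ends e \<subseteq> V \<and> card (ends e) = 2)"

definition delta :: "('e \<Rightarrow> 'v set) \<Rightarrow> 'e set \<Rightarrow> 'v \<Rightarrow> 'e set" where
  "delta ends F v = {e\<in>F. v \<in> ends e}"

definition consistent_ordering ::
  "'v set \<Rightarrow> 'e set \<Rightarrow> ('e \<Rightarrow> 'v set) \<Rightarrow> ('v \<Rightarrow> 'e \<Rightarrow> real) \<Rightarrow> 'e rel \<Rightarrow> bool" where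
  "consistent_ordering V E ends d R \<longleftrightarrow>
     linear_order_on E R \<and>
     (\<forall>v\<in>V. \<forall>e\<in>delta ends E v. \<forall>f\<in>delta ends E v. (e, f) \<in> R \<longrightarrow> d v e \<le> d v f)"

definition has_consistent_ordering ::
  "'v set \<Rightarrow> 'e set \<Rightarrow> ('e \<Rightarrow> 'v set) \<Rightarrow> ('v \<Rightarrow> 'e \<Rightarrow> real) \<Rightarrow> bool" where
  "has_consistent_ordering V E ends d \<longleftrightarrow> (\<exists>R. consistent_ordering V E ends d R)"

definition top_two :: "('e \<Rightarrow> 'v set) \<Rightarrow> ('v \<Rightarrow> 'e \<Rightarrow> real) \<Rightarrow> 'e set \<Rightarrow> 'v \<Rightarrow> 'e set \<Rightarrow> bool" where
  "top_two ends d M' v L \<longleftrightarrow>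
     L \<subseteq> delta ends M' v \<and> card L = min 2 (card (delta ends M' v)) \<and>
     (\<forall>e\<in>L. \<forall>f\<in>delta ends M' v - L. d v f \<le> d v e)"

end

theory Submission
  imports Defs
begin

lemma R_min:
  assumes "trans R" "total_on E R" "\<forall>x\<in>E. (x,x)\<in>R" "finite F" "F \<noteq> {}" "F \<subseteq> E"
  shows "\<exists>m\<in>F. \<forall>g\<in>F. (m,g)\<in>R"
  using assms(4,5,6)
proof (induction F rule: finite_ne_induct)
  case (singleton x) then show ?case using assms(3) by auto
next
  case (insert x F)
  then obtain m where m: "m\<in>F" "\<forall>g\<in>F. (m,g)\<in>R" by auto
  show ?case
  proof (cases "(x,m)\<in>R")
    case True then show ?thesis using m assms(1,3) insert.prems unfolding trans_def by blast
  next
    case False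
    then have "(m,x)\<in>R" using assms(2,3) m insert.prems unfolding total_on_def by (cases "x = m") auto
    then show ?thesis using m by blast
  qed
qed

lemma R_max:
  assumes "trans R" "total_on E R" "\<forall>x\<in>E. (x,x)\<in>R" "finite F" "F \<noteq> {}" "F \<subseteq> E"
  shows "\<exists>m\<in>F. \<forall>g\<in>F. (g,m)\<in>R"
proof -
  have "trans (R\<inverse>)" "total_on E (R\<inverse>)" "\<forall>x\<in>E. (x,x)\<in>R\<inverse>"
    using assms(1-3) by (auto simp: total_on_def)
  from R_min[OF this assms(4-6)] show ?thesis by auto
qed

lemma sum_top:
  fixes d :: "'e \<Rightarrow> real"
  assumes "finite S" "A \<subseteq> S" "B \<subseteq> S" "card B \<le> card A"
    and "\<forall>x\<in>A. \<forall>y\<in>S-A. d y \<le> d x" and "\<forall>x\<in>S. d x \<ge> 0"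
  shows "sum d (S - A) \<le> sum d (S - B)"
proof -
  have fA: "finite A" "finite B" using assms(1,2,3) finite_subset by blast+
  have cd: "card (B - A) \<le> card (A - B)"
  proof -
    have "card (A - B) = card A - card (A \<inter> B)" using fA by (simp add: card_Diff_subset_Int)
    moreover have "card (B - A) = card B - card (A \<inter> B)" using fA by (simp add: card_Diff_subset_Int Int_commute)
    moreover have "card (A \<inter> B) \<le> card B" using fA by (simp add: card_mono)
    ultimately show ?thesis using assms(4) by linarith
  qed
  have "sum d (B - A) \<le> sum d (A - B)"
  proof (cases "B - A = {}")
    case True
    have "0 \<le> sum d (A - B)" by (rule sum_nonneg) (use assms(2,6) in auto)
    moreover have "B - A = {}" using True .
    ultimately show ?thesis by (metis sum.empty)
  next
    case False
    define c where "c = Max (d ` (B - A))"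
    have "\<forall>y\<in>B-A. d y \<le> c" unfolding c_def using fA by auto
    then have "sum d (B - A) \<le> real (card (B - A)) * c"
      using sum_bounded_above[of "B-A" d c] by auto
    also have "\<dots> \<le> real (card (A - B)) * c"
    proof -
      have "c \<in> d ` (B - A)" unfolding c_def using False fA by auto
      then have "c \<ge> 0" using assms(3,6) by auto
      then show ?thesis using cd by (simp add: mult_right_mono)
    qed
    also have "\<dots> \<le> sum d (A - B)"
    proof -
      have "c \<in> d ` (B - A)" unfolding c_def using False fA by auto
      then obtain y where y: "y \<in> B - A" "c = d y" by auto
      then have "\<forall>x\<in>A-B. c \<le> d x" using assms(3,5) by auto
      then show ?thesis using sum_bounded_below[of "A-B" c d] by auto
    qed
    finally show ?thesis .
  qed
  moreover have "sum d (S - A) = sum d S - sum d A" using assms fA by (simp add: sum_diff)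
  moreover have "sum d (S - B) = sum d S - sum d B" using assms fA by (simp add: sum_diff)
  moreover have "sum d A = sum d (A - B) + sum d (A \<inter> B)" using fA
    using sum.Int_Diff[OF fA(1), of d B] by simp
  moreover have "sum d B = sum d (B - A) + sum d (A \<inter> B)" using fA
    using sum.Int_Diff[OF fA(2), of d A] by (simp add: Int_commute)
  ultimately show ?thesis by linarith
qed

definition abv :: "'e rel \<Rightarrow> 'e set \<Rightarrow> 'e \<Rightarrow> 'e set" where
  "abv R S e = {g\<in>S. (e,g)\<in>R \<and> g\<noteq>e}"
definition topk :: "'e rel \<Rightarrow> 'e set \<Rightarrow> nat \<Rightarrow> 'e set" where
  "topk R S k = {e\<in>S. card (abv R S e) < k}"

lemma abv_strict:
  assumes "trans R" "antisym R" "finite S" "f\<in>S" "g\<in>S" "(f,g)\<in>R" "g\<noteq>f"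
  shows "card (abv R S g) < card (abv R S f)"
proof -
  have "abv R S g \<subseteq> abv R S f"
  proof
    fix h assume "h \<in> abv R S g"
    then have h: "h\<in>S" "(g,h)\<in>R" "h\<noteq>g" unfolding abv_def by auto
    have "(f,h)\<in>R" using h assms(1,6) unfolding trans_def by blast
    moreover have "h \<noteq> f" using h assms(2,6,7) unfolding antisym_def by blast
    ultimately show "h \<in> abv R S f" using h unfolding abv_def by auto
  qed
  moreover have "g \<in> abv R S f" "g \<notin> abv R S g" using assms unfolding abv_def by auto
  ultimately have "abv R S g \<subset> abv R S f" by blast
  moreover have "finite (abv R S f)" using assms(3) unfolding abv_def by auto
  ultimately show ?thesis by (rule psubset_card_mono[rotated])
qed

lemma topk_props:
  assumes "trans R" "antisym R" "total_on E R" "\<forall>x\<in>E. (x,x)\<in>R" "finite S" "S \<subseteq> E" "k \<le> card S"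
  shows "topk R S k \<subseteq> S" "card (topk R S k) \<le> k" "card (topk R S k) \<ge> k"
    "\<forall>f\<in>topk R S k. \<forall>g\<in>S. (f,g)\<in>R \<longrightarrow> g\<in>topk R S k"
    "\<forall>e\<in>topk R S k. \<forall>f\<in>S - topk R S k. (f,e)\<in>R"
proof -
  let ?K = "topk R S k"
  show sub: "?K \<subseteq> S" unfolding topk_def by auto
  show up: "\<forall>f\<in>?K. \<forall>g\<in>S. (f,g)\<in>R \<longrightarrow> g\<in>?K"
  proof (intro ballI impI)
    fix f g assume f: "f\<in>?K" and g: "g\<in>S" and fg: "(f,g)\<in>R"
    show "g \<in> ?K"
    proof (cases "g = f")
      case True then show ?thesis using f by simp
    next
      case False
      have "card (abv R S g) < card (abv R S f)"
        using abv_strict[OF assms(1,2,5) _ g fg False] f sub by auto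
      then show ?thesis using f g unfolding topk_def by auto
    qed
  qed
  have "inj_on (\<lambda>e. card (abv R S e)) ?K"
  proof (rule inj_onI)
    fix e f assume e: "e\<in>?K" and f: "f\<in>?K" and eq: "card (abv R S e) = card (abv R S f)"
    show "e = f"
    proof (rule ccontr)
      assume ne: "e \<noteq> f"
      have "e\<in>E" "f\<in>E" using e f sub assms(6) by auto
      then have "(e,f)\<in>R \<or> (f,e)\<in>R" using ne assms(3) unfolding total_on_def by auto
      then show False
      proof
        assume "(e,f)\<in>R"
        from abv_strict[OF assms(1,2,5) _ _ this] ne e f sub eq show False by auto
      next
        assume "(f,e)\<in>R"
        from abv_strict[OF assms(1,2,5) _ _ this] ne e f sub eq show False by auto
      qed
    qed
  qed
  moreover have "(\<lambda>e. card (abv R S e)) ` ?K \<subseteq> {..<k}" unfolding topk_def by auto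
  ultimately show "card ?K \<le> k" using card_inj_on_le[of _ ?K "{..<k}"] by auto
  show "card ?K \<ge> k"
  proof (rule ccontr)
    assume lt: "\<not> k \<le> card ?K"
    have fK: "finite ?K" using sub assms(5) finite_subset by blast
    have "S - ?K \<noteq> {}"
    proof
      assume "S - ?K = {}"
      then have "S \<subseteq> ?K" by blast
      then have "card S \<le> card ?K" using fK card_mono by blast
      then show False using lt assms(7) by linarith
    qed
    then obtain m where m: "m \<in> S - ?K" "\<forall>g\<in>S - ?K. (g,m)\<in>R"
      using R_max[OF assms(1,3,4), of "S - ?K"] assms(5,6) by blast
    have "abv R S m \<subseteq> ?K"
    proof
      fix g assume g: "g \<in> abv R S m"
      show "g \<in> ?K"
      proof (rule ccontr)
        assume "g \<notin> ?K"
        then have "(g,m)\<in>R" using m g unfolding abv_def by auto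
        then show False using g assms(2) unfolding abv_def antisym_def by auto
      qed
    qed
    then have "card (abv R S m) \<le> card ?K" using fK card_mono by blast
    then have "m \<in> ?K" using lt m unfolding topk_def by auto
    then show False using m by auto
  qed
  show "\<forall>e\<in>?K. \<forall>f\<in>S - ?K. (f,e)\<in>R"
  proof (intro ballI)
    fix e f assume e: "e\<in>?K" and f: "f\<in>S - ?K"
    have ne: "e\<noteq>f" using e f by auto
    have "e\<in>E" "f\<in>E" using e f sub assms(6) by auto
    then have "(e,f)\<in>R \<or> (f,e)\<in>R" using ne assms(3) unfolding total_on_def by auto
    then show "(f,e)\<in>R" using up e f by auto
  qed
qed

lemma coloring:
  assumes "trans R" "total_on E R" "\<forall>x\<in>E. (x,x)\<in>R" "finite M" "M \<subseteq> E"
    and Ksub: "\<forall>v. K v \<subseteq> {e\<in>M. v \<in> ends e}" and Kcard: "\<forall>v. card (K v) \<le> 2"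
    and Kup: "\<forall>v. \<forall>f\<in>K v. \<forall>g\<in>M. v\<in>ends g \<longrightarrow> (f,g)\<in>R \<longrightarrow> g\<in>K v"
    and ends2: "\<forall>e\<in>M. card (ends e) = 2"
  shows "\<exists>c. (\<forall>e\<in>M. c e < (5::nat)) \<and>
     (\<forall>v. \<forall>e\<in>M. \<forall>g\<in>M. e\<noteq>g \<longrightarrow> v\<in>ends e \<longrightarrow> v\<in>ends g \<longrightarrow> e\<in>K v \<longrightarrow> c e \<noteq> c g)"
proof -
  have "\<And>F. F \<subseteq> M \<Longrightarrow> card F = n \<Longrightarrow> \<exists>c. (\<forall>e\<in>F. c e < (5::nat)) \<and>
     (\<forall>v. \<forall>e\<in>F. \<forall>g\<in>F. e\<noteq>g \<longrightarrow> v\<in>ends e \<longrightarrow> v\<in>ends g \<longrightarrow> e\<in>K v \<longrightarrow> c e \<noteq> c g)" for n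
  proof (induction n)
    case 0
    then have "F = {}" using assms(4) finite_subset by fastforce
    then show ?case by auto
  next
    case (Suc n)
    have fF: "finite F" using Suc.prems(1) assms(4) finite_subset by blast
    have ne: "F \<noteq> {}" using Suc.prems(2) by auto
    obtain f where f: "f \<in> F" "\<forall>g\<in>F. (f,g)\<in>R"
      using R_min[OF assms(1,2,3) fF ne] Suc.prems(1) assms(5) by blast
    let ?F0 = "F - {f}"
    have "card ?F0 = n" using Suc.prems(2) f(1) fF by simp
    moreover have "?F0 \<subseteq> M" using Suc.prems(1) by blast
    ultimately have "\<exists>c. (\<forall>e\<in>?F0. c e < (5::nat)) \<and>
      (\<forall>v. \<forall>e\<in>?F0. \<forall>g\<in>?F0. e\<noteq>g \<longrightarrow> v\<in>ends e \<longrightarrow> v\<in>ends g \<longrightarrow> e\<in>K v \<longrightarrow> c e \<noteq> c g)"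
      using Suc.IH by blast
    then obtain c where c: "\<forall>e\<in>?F0. c e < (5::nat)"
      "\<forall>v. \<forall>e\<in>?F0. \<forall>g\<in>?F0. e\<noteq>g \<longrightarrow> v\<in>ends e \<longrightarrow> v\<in>ends g \<longrightarrow> e\<in>K v \<longrightarrow> c e \<noteq> c g"
      by (elim exE conjE) blast
    define N where "N = (\<Union>v\<in>ends f. K v)"
    have fends: "finite (ends f)" "card (ends f) = 2" using ends2 f(1) Suc.prems(1)
      by (metis card.infinite zero_neq_numeral in_mono)+
    have fK: "finite (K v)" for v by (rule finite_subset[OF Ksub[rule_format]]) (use assms(4) in auto)
    have fN: "finite N" unfolding N_def using fends(1) fK by blast
    have "card N \<le> (\<Sum>v\<in>ends f. card (K v))" unfolding N_def using card_UN_le[OF fends(1)] .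
    also have "\<dots> \<le> (\<Sum>v\<in>ends f. 2)" by (rule sum_mono) (use Kcard in auto)
    also have "\<dots> = 4" using fends by simp
    finally have "card N \<le> 4" .
    then have "card (c ` N) \<le> 4" using card_image_le[OF fN, of c] by linarith
    moreover have "{..<(5::nat)} \<subseteq> c ` N \<Longrightarrow> card {..<(5::nat)} \<le> card (c ` N)"
      using fN by (intro card_mono) auto
    ultimately have "\<not> {..<(5::nat)} \<subseteq> c ` N" by auto
    then obtain k where k: "k < (5::nat)" "k \<notin> c ` N" by auto
    define c' where "c' = c(f := k)"
    show ?case
    proof (intro exI[of _ c'] conjI allI ballI impI)
      fix e assume "e \<in> F" then show "c' e < 5" using c(1) k unfolding c'_def by auto
    next
      fix v e g assume e: "e\<in>F" and g: "g\<in>F" and neq: "e\<noteq>g" and ve: "v\<in>ends e" and vg: "v\<in>ends g"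
        and eK: "e\<in>K v"
      show "c' e \<noteq> c' g"
      proof (cases "e = f")
        case True
        have fg: "(f,g)\<in>R" using f g by auto
        have fK': "f \<in> K v" using eK True by simp
        have gM: "g\<in>M" using g Suc.prems(1) by blast
        have "g \<in> K v" using Kup[rule_format, OF fK' gM vg fg] .
        then have "g \<in> N" unfolding N_def using True ve by auto
        then show ?thesis using True neq k unfolding c'_def by auto
      next
        case False
        show ?thesis
        proof (cases "g = f")
          case True
          then have "e \<in> N" unfolding N_def using eK vg by auto
          then show ?thesis using True False k unfolding c'_def by (auto simp: image_iff) 
        next
          case False2: False
          have "e \<in> ?F0" "g \<in> ?F0" using e g False False2 by auto
          then have "c e \<noteq> c g" using c(2)[rule_format, of e g v] neq ve vg eK by blast
          then show ?thesis using False False2 unfolding c'_def by simp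
        qed
      qed
    qed
  qed
  then show ?thesis by blast
qed

theorem lemma7:
  fixes V :: "'v set" and E :: "'e set" and ends :: "'e \<Rightarrow> 'v set"
    and b :: "'v \<Rightarrow> real" and d :: "'v \<Rightarrow> 'e \<Rightarrow> real" and p :: "'e \<Rightarrow> real"
    and M' :: "'e set" and L :: "'v \<Rightarrow> 'e set"
  assumes "graph V E ends"
    and "\<forall>v\<in>V. b v \<ge> 0"
    and "\<forall>e\<in>E. \<forall>v\<in>ends e. d v e \<ge> 0"
    and "\<forall>e\<in>E. p e \<ge> 0"
    and "has_consistent_ordering V E ends d"
    and "\<forall>v\<in>V. \<forall>e\<in>delta ends E v. d v e \<le> b v"
    and "M' \<subseteq> E"
    and "\<forall>v\<in>V. top_two ends d M' v (L v)"
    and "\<forall>v\<in>V. (\<Sum>e\<in>delta ends M' v - L v. d v e) \<le> b v"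
  shows "\<exists>M\<subseteq>M'. (\<forall>v\<in>V. (\<Sum>e\<in>delta ends M v. d v e) \<le> b v) \<and>
                   (\<Sum>e\<in>M. p e) \<ge> (\<Sum>e\<in>M'. p e) / 5"
proof -
  have fV: "finite V" and fE: "finite E" and endsE: "\<forall>e\<in>E. ends e \<subseteq> V \<and> card (ends e) = 2"
    using assms(1) unfolding graph_def by auto
  obtain R where R: "consistent_ordering V E ends d R" using assms(5) unfolding has_consistent_ordering_def by blast
  have lin: "linear_order_on E R" and cons: "\<forall>v\<in>V. \<forall>e\<in>delta ends E v. \<forall>f\<in>delta ends E v. (e, f) \<in> R \<longrightarrow> d v e \<le> d v f"
    using R unfolding consistent_ordering_def by auto
  have tr: "trans R" and an: "antisym R" and tot: "total_on E R" and rf: "\<forall>x\<in>E. (x,x)\<in>R"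
    using lin unfolding linear_order_on_def partial_order_on_def preorder_on_def refl_on_def by auto
  have fM: "finite M'" using assms(7) fE finite_subset by blast
  define S where "S v = delta ends M' v" for v
  define K where "K v = (if v\<in>V then topk R (S v) (card (L v)) else {})" for v
  have fS: "finite (S v)" for v unfolding S_def delta_def using fM by auto
  have SE: "S v \<subseteq> E" for v unfolding S_def delta_def using assms(7) by auto
  have kle: "card (L v) \<le> card (S v)" "card (L v) \<le> 2" if "v\<in>V" for v
    using assms(8) that unfolding top_two_def S_def by auto
  note tp = topk_props[OF tr an tot rf fS SE kle(1)]
  have Ksub: "\<forall>v. K v \<subseteq> {e\<in>M'. v \<in> ends e}"
    using tp(1) unfolding K_def S_def delta_def by auto
  have Kcard: "\<forall>v. card (K v) \<le> 2"
  proof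
    fix v show "card (K v) \<le> 2"
    proof (cases "v \<in> V")
      case True then show ?thesis using tp(2)[OF True] kle(2)[OF True] unfolding K_def by auto
    qed (simp add: K_def)
  qed
  have Kup: "\<forall>v. \<forall>f\<in>K v. \<forall>g\<in>M'. v\<in>ends g \<longrightarrow> (f,g)\<in>R \<longrightarrow> g\<in>K v"
  proof (intro allI ballI impI)
    fix v f g assume f: "f \<in> K v" and g: "g\<in>M'" "v\<in>ends g" and fg: "(f,g)\<in>R"
    then have v: "v \<in> V" unfolding K_def by (auto split: if_splits)
    have "g \<in> S v" using g unfolding S_def delta_def by auto
    then show "g \<in> K v" using tp(4)[OF v] f fg v unfolding K_def by auto
  qed
  have ends2: "\<forall>e\<in>M'. card (ends e) = 2" using endsE assms(7) by auto
  obtain c where c5: "\<forall>e\<in>M'. c e < (5::nat)" and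
    cK: "\<forall>v. \<forall>e\<in>M'. \<forall>g\<in>M'. e\<noteq>g \<longrightarrow> v\<in>ends e \<longrightarrow> v\<in>ends g \<longrightarrow> e\<in>K v \<longrightarrow> c e \<noteq> c g"
    using coloring[OF tr tot rf fM assms(7) Ksub Kcard Kup ends2] by blast
  have dnn: "\<forall>e\<in>S v. d v e \<ge> 0" for v
    using assms(3,7) unfolding S_def delta_def by auto
  have P3: "sum (d v) (S v - K v) \<le> b v" if v: "v \<in> V" for v
  proof -
    have "sum (d v) (S v - K v) \<le> sum (d v) (S v - L v)"
    proof (rule sum_top[OF fS])
      show "K v \<subseteq> S v" using tp(1)[OF v] v unfolding K_def by auto
      show "L v \<subseteq> S v" using assms(8) v unfolding top_two_def S_def by auto
      show "card (L v) \<le> card (K v)" using tp(3)[OF v] v unfolding K_def by auto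
      show "\<forall>x\<in>S v. 0 \<le> d v x" using dnn .
      show "\<forall>x\<in>K v. \<forall>y\<in>S v - K v. d v y \<le> d v x"
      proof (intro ballI)
        fix x y assume x: "x \<in> K v" and y: "y \<in> S v - K v"
        have "(y,x) \<in> R" using tp(5)[OF v] x y v unfolding K_def by auto
        moreover have "x \<in> delta ends E v" "y \<in> delta ends E v"
          using x y tp(1)[OF v] v SE unfolding K_def S_def delta_def by auto
        ultimately show "d v y \<le> d v x" using cons v by blast
      qed
    qed
    also have "\<dots> \<le> b v" using assms(9) v unfolding S_def by auto
    finally show ?thesis .
  qed
  define C where "C j = {e\<in>M'. c e = j}" for j
  have feas: "sum (d v) (delta ends (C j) v) \<le> b v" if v: "v \<in> V" for v j
  proof (cases "\<exists>e\<in>delta ends (C j) v. e \<in> K v")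
    case True
    then obtain e where e: "e \<in> delta ends (C j) v" "e \<in> K v" by blast
    have "delta ends (C j) v = {e}"
    proof
      show "delta ends (C j) v \<subseteq> {e}"
      proof
        fix g assume g: "g \<in> delta ends (C j) v"
        show "g \<in> {e}"
        proof (rule ccontr)
          assume "g \<notin> {e}"
          then have "e \<noteq> g" by auto
          moreover have "e \<in> M'" "g \<in> M'" "v \<in> ends e" "v \<in> ends g" "c e = j" "c g = j"
            using e g unfolding delta_def C_def by auto
          ultimately show False using cK[rule_format, of e g v] e(2) by auto
        qed
      qed
      show "{e} \<subseteq> delta ends (C j) v" using e by auto
    qed
    moreover have "e \<in> delta ends E v" using e assms(7) unfolding delta_def C_def by auto
    ultimately show ?thesis using assms(6) v by auto
  next
    case False
    then have sub: "delta ends (C j) v \<subseteq> S v - K v" unfolding S_def C_def delta_def by auto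
    have "sum (d v) (delta ends (C j) v) \<le> sum (d v) (S v - K v)"
      by (rule sum_mono2) (use fS sub dnn in auto)
    then show ?thesis using P3[OF v] by linarith
  qed
  have tot_eq: "(\<Sum>j\<in>{..<5::nat}. sum p (C j)) = sum p M'"
    unfolding C_def using sum.group[OF fM, of "{..<5::nat}" c p] c5 by auto
  have "\<exists>j<5. sum p (C j) \<ge> sum p M' / 5"
  proof (rule ccontr)
    assume "\<not> ?thesis"
    then have lt: "\<forall>j\<in>{..<5::nat}. sum p (C j) < sum p M' / 5" by auto
    have "(\<Sum>j\<in>{..<5::nat}. sum p (C j)) < (\<Sum>j\<in>{..<5::nat}. sum p M' / 5)"
    proof (rule sum_strict_mono)
      have "(0::nat) \<in> {..<5}" by simp
      then show "{..<5::nat} \<noteq> {}" by blast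
    qed (use lt in auto)
    then show False using tot_eq by simp
  qed
  then obtain j where "sum p (C j) \<ge> sum p M' / 5" by blast
  moreover have "C j \<subseteq> M'" unfolding C_def by auto
  ultimately show ?thesis using feas by blast
qed

end
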